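(* Let $\mathbb{K}$ be a semiring. Every unambiguous one-way $\mathbb{K}$-automaton is equivalent to a deterministic two-way $\mathbb{K}$-automaton, i.e. both assign the same weight to every word of $A^*$.
   Context: A semiring $\mathbb{K}$ (not necessarily commutative) has addition $\oplus$ and multiplication $\otimes$ with the usual axioms. A one-way $\mathbb{K}$-automaton $(P,A,G,I',T')$ has finite state set $P$, partial $I',T':P\to\mathbb{K}$ (supports: initial/final states) and partial $G:P\times A\times P\to\mathbb{K}$ (support: transitions); its computations on $w=w_1\cdots w_n$ are paths $(q_0,w_1,q_1)\cdots(q_{n-1},w_n,q_n)$ of transitions from an initial to a final state, with weight $I'(q_0)\otimes G(q_0,w_1,q_1)\otimes\cdots\otimes G(q_{n-1},w_n,q_n)\otimes T'(q_n)$; the weight of $w$ is the sum of these. It is unambiguous if every word labels at most one computation. With $A_{\vdash\dashv}=A\cup\{\vdash,\dashv\}$ ($\vdash,\dashv$ fresh end-markers), a two-way $\mathbb{K}$-automaton $(Q,A,E,I,T)$ has finite state set $Q$, partial $I,T:Q\to\mathbb{K}$, and partial $E:Q\times(A_{\vdash\dashv}\times\{-1,+1\})\times Q\to\mathbb{K}$ whose support (the transitions) contains no $(p,\vdash,-1,q)$ nor $(p,\dashv,+1,q)$; for $t=(p,a,d,q)$: $\sigma(t)=p$, $\tau(t)=q$, $\lambda(t)=a$, $\delta(t)=d$. For $w=w_1\cdots w_n$ set $w_0=\vdash$, $w_{n+1}=\dashv$; a computation on $w$ is a sequence of configurations $((p_0,i_0),\dots,(p_k,i_k))$, $i_j\in[0;n+1]$,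 with $i_0=1$, $i_k=n+1$, $p_0$ initial, $p_k$ final, and transitions $t_j$ with $\sigma(t_j)=p_j$, $\tau(t_j)=p_{j+1}$, $\lambda(t_j)=w_{i_j}$, $i_{j+1}=i_j+\delta(t_j)$; its weight is $I(p_0)\otimes\bigotimes_{j=0}^{k-1}E(t_j)\otimes T(p_k)$, and the weight of $w$ is the sum of the weights of its computations. A two-way automaton is deterministic if (i) it has at most one initial state; (ii) for every state $p$ and every letter $a$ there is at most one transition outgoing from $p$ with label $a$; (iii) for every final state $p$ there is no transition outgoing from $p$ with label $\dashv$. *)

theory Defs
  imports Main
begin

text \<open>Weights live in a semiring, not necessarily commutative:
  type class semiring_0 (commutative monoid for addition, distributivity,
  0 absorbing) together with monoid_mult (associative multiplication with unit).\<close>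

text \<open>A one-way automaton (P, A, G, I', T'); partial maps are rendered with option.\<close>
record ('p, 'a, 'k) oneway =
  states1 :: "'p set"
  init1   :: "'p \<Rightarrow> 'k option"
  fin1    :: "'p \<Rightarrow> 'k option"
  trans1  :: "'p \<Rightarrow> 'a \<Rightarrow> 'p \<Rightarrow> 'k option"

definition wf1 :: "'a set \<Rightarrow> ('p, 'a, 'k) oneway \<Rightarrow> bool" where
  "wf1 A M \<longleftrightarrow> finite (states1 M)
     \<and> (\<forall>q. init1 M q \<noteq> None \<longrightarrow> q \<in> states1 M)
     \<and> (\<forall>q. fin1 M q \<noteq> None \<longrightarrow> q \<in> states1 M)
     \<and> (\<forall>p a q. trans1 M p a q \<noteq> None \<longrightarrow> p \<in> states1 M \<and> a \<in> A \<and> q \<in> states1 M)"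

text \<open>A computation on w = w_1...w_n is the state sequence q_0 ... q_n
  (the transitions (q_{i-1}, w_i, q_i) are determined by it).\<close>
definition comps1 :: "('p, 'a, 'k) oneway \<Rightarrow> 'a list \<Rightarrow> 'p list set" where
  "comps1 M w = {qs. length qs = Suc (length w)
      \<and> init1 M (hd qs) \<noteq> None \<and> fin1 M (last qs) \<noteq> None
      \<and> (\<forall>i < length w. trans1 M (qs ! i) (w ! i) (qs ! Suc i) \<noteq> None)}"

definition cweight1 :: "('p, 'a, 'k::{semiring_0, monoid_mult}) oneway \<Rightarrow> 'a list \<Rightarrow> 'p list \<Rightarrow> 'k" where
  "cweight1 M w qs = the (init1 M (hd qs))
      * prod_list (map (\<lambda>i. the (trans1 M (qs ! i) (w ! i) (qs ! Suc i))) [0..<length w])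
      * the (fin1 M (last qs))"

definition weight1 :: "('p, 'a, 'k::{semiring_0, monoid_mult}) oneway \<Rightarrow> 'a list \<Rightarrow> 'k" where
  "weight1 M w = (\<Sum>qs \<in> comps1 M w. cweight1 M w qs)"

definition unambiguous1 :: "'a set \<Rightarrow> ('p, 'a, 'k) oneway \<Rightarrow> bool" where
  "unambiguous1 A M \<longleftrightarrow> (\<forall>w \<in> lists A. \<forall>c1 \<in> comps1 M w. \<forall>c2 \<in> comps1 M w. c1 = c2)"

datatype 'a marked = LEnd | REnd | Letter 'a

datatype dir = DL | DR

fun dval :: "dir \<Rightarrow> int" where
  "dval DL = -1" | "dval DR = 1"

record ('q, 'a, 'k) twoway =
  states2 :: "'q set"
  init2   :: "'q \<Rightarrow> 'k option"
  fin2    :: "'q \<Rightarrow> 'k option"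
  trans2  :: "'q \<Rightarrow> 'a marked \<Rightarrow> dir \<Rightarrow> 'q \<Rightarrow> 'k option"

definition wf2 :: "'a set \<Rightarrow> ('q, 'a, 'k) twoway \<Rightarrow> bool" where
  "wf2 A B \<longleftrightarrow> finite (states2 B)
     \<and> (\<forall>q. init2 B q \<noteq> None \<longrightarrow> q \<in> states2 B)
     \<and> (\<forall>q. fin2 B q \<noteq> None \<longrightarrow> q \<in> states2 B)
     \<and> (\<forall>p a d q. trans2 B p a d q \<noteq> None \<longrightarrow> p \<in> states2 B \<and> q \<in> states2 B
            \<and> (\<forall>b. a = Letter b \<longrightarrow> b \<in> A))
     \<and> (\<forall>p q. trans2 B p LEnd DL q = None)
     \<and> (\<forall>p q. trans2 B p REnd DR q = None)"

text \<open>The symbol w_i at position i of the marked word (w_0 = left marker, w_{n+1} = right marker).\<close>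
definition tape :: "'a list \<Rightarrow> int \<Rightarrow> 'a marked" where
  "tape w i = (if i = 0 then LEnd else if i = int (length w) + 1 then REnd
               else Letter (w ! nat (i - 1)))"

definition dir_of :: "int \<Rightarrow> dir" where
  "dir_of k = (if k = 1 then DR else DL)"

text \<open>A computation is a list of configurations (p_j, i_j); the transitions
  t_j = (p_j, w_{i_j}, i_{j+1} - i_j, p_{j+1}) are determined by it.\<close>
definition comps2 :: "('q, 'a, 'k) twoway \<Rightarrow> 'a list \<Rightarrow> ('q \<times> int) list set" where
  "comps2 B w = {cs. cs \<noteq> []
      \<and> (\<forall>c \<in> set cs. 0 \<le> snd c \<and> snd c \<le> int (length w) + 1)
      \<and> snd (hd cs) = 1 \<and> snd (last cs) = int (length w) + 1
      \<and> init2 B (fst (hd cs)) \<noteq> None \<and> fin2 B (fst (last cs)) \<noteq> None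
      \<and> (\<forall>j. Suc j < length cs \<longrightarrow> (\<exists>d.
            trans2 B (fst (cs ! j)) (tape w (snd (cs ! j))) d (fst (cs ! Suc j)) \<noteq> None
            \<and> snd (cs ! Suc j) = snd (cs ! j) + dval d))}"

definition cweight2 :: "('q, 'a, 'k::{semiring_0, monoid_mult}) twoway \<Rightarrow> 'a list \<Rightarrow> ('q \<times> int) list \<Rightarrow> 'k" where
  "cweight2 B w cs = the (init2 B (fst (hd cs)))
      * prod_list (map (\<lambda>j. the (trans2 B (fst (cs ! j)) (tape w (snd (cs ! j)))
                          (dir_of (snd (cs ! Suc j) - snd (cs ! j))) (fst (cs ! Suc j))))
                     [0..<length cs - 1])
      * the (fin2 B (fst (last cs)))"

text \<open>Weight of a word: sum over its computations (only meaningful when there are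
  finitely many; the main theorem asserts finiteness explicitly).\<close>
definition weight2 :: "('q, 'a, 'k::{semiring_0, monoid_mult}) twoway \<Rightarrow> 'a list \<Rightarrow> 'k" where
  "weight2 B w = (\<Sum>cs \<in> comps2 B w. cweight2 B w cs)"

definition deterministic2 :: "('q, 'a, 'k) twoway \<Rightarrow> bool" where
  "deterministic2 B \<longleftrightarrow>
     (\<forall>p q. init2 B p \<noteq> None \<longrightarrow> init2 B q \<noteq> None \<longrightarrow> p = q)
     \<and> (\<forall>p a d q d' q'. trans2 B p a d q \<noteq> None \<longrightarrow> trans2 B p a d' q' \<noteq> None
            \<longrightarrow> d = d' \<and> q = q')
     \<and> (\<forall>p d q. fin2 B p \<noteq> None \<longrightarrow> trans2 B p REnd d q = None)"

end

theory Submission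
  imports Defs
begin


inductive reach :: "('q, 'a, 'k::{semiring_0, monoid_mult}) twoway \<Rightarrow> 'a list \<Rightarrow> ('q \<times> int) \<Rightarrow> ('q \<times> int) \<Rightarrow> 'k \<Rightarrow> bool"
  for B w where
  refl: "reach B w c c 1"
| step: "trans2 B p (tape w i) d p' = Some x \<Longrightarrow> 0 \<le> i \<Longrightarrow> i \<le> int (length w) + 1
         \<Longrightarrow> reach B w (p', i + dval d) c y \<Longrightarrow> reach B w (p, i) c (x * y)"

lemma reach_trans: "reach B w c1 c2 x \<Longrightarrow> reach B w c2 c3 y \<Longrightarrow> reach B w c1 c3 (x * y)"
proof (induction rule: reach.induct)
  case (refl c) then show ?case by simp
next
  case (step p i d p' x c y)
  then show ?case by (metis mult.assoc reach.step)
qed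

lemma dir_of_dval[simp]: "dir_of (dval d) = d"
  by (cases d) (auto simp: dir_of_def)

lemma tape_0[simp]: "tape w 0 = LEnd" by (simp add: tape_def)
lemma tape_end[simp]: "tape w (int (length w) + 1) = REnd" by (simp add: tape_def)
lemma tape_end'[simp]: "tape w (int (Suc (length w))) = REnd" by (simp add: tape_def)
lemma tape_Suc: "k < length w \<Longrightarrow> tape w (int (Suc k)) = Letter (w ! k)"
  by (simp add: tape_def)

lemma tape_move:
  assumes "wf2 A B" "trans2 B p (tape w i) d q \<noteq> None" "0 \<le> i" "i \<le> int (length w) + 1"
  shows "0 \<le> i + dval d \<and> i + dval d \<le> int (length w) + 1"
proof -
  have "i = 0 \<Longrightarrow> d = DR" using assms(1,2) unfolding wf2_def by (cases d) auto
  moreover have "i = int (length w) + 1 \<Longrightarrow> d = DL" using assms(1,2) unfolding wf2_def by (cases d) auto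
  ultimately show ?thesis using assms(3,4) by (cases d) (fastforce, fastforce)
qed

lemma map_upt_Suc0: "map f [0..<Suc m] = f 0 # map (\<lambda>j. f (Suc j)) [0..<m]"
  by (induction m) auto

lemma reach_list:
  assumes "reach B w c1 c2 x" "wf2 A B" "0 \<le> snd c1" "snd c1 \<le> int (length w) + 1"
  shows "\<exists>cs. cs \<noteq> [] \<and> hd cs = c1 \<and> last cs = c2
      \<and> (\<forall>c \<in> set cs. 0 \<le> snd c \<and> snd c \<le> int (length w) + 1)
      \<and> (\<forall>j. Suc j < length cs \<longrightarrow> (\<exists>d.
            trans2 B (fst (cs ! j)) (tape w (snd (cs ! j))) d (fst (cs ! Suc j)) \<noteq> None
            \<and> snd (cs ! Suc j) = snd (cs ! j) + dval d))
      \<and> prod_list (map (\<lambda>j. the (trans2 B (fst (cs ! j)) (tape w (snd (cs ! j)))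
                          (dir_of (snd (cs ! Suc j) - snd (cs ! j))) (fst (cs ! Suc j))))
                     [0..<length cs - 1]) = x"
  using assms
proof (induction rule: reach.induct)
  case (refl c)
  then show ?case by (intro exI[of _ "[c]"]) auto
next
  case (step p i d p' x c y)
  have rng: "0 \<le> i + dval d \<and> i + dval d \<le> int (length w) + 1"
    using tape_move[OF step.prems(1), of p w i d p'] step.hyps by auto
  then obtain cs where cs: "cs \<noteq> []" "hd cs = (p', i + dval d)" "last cs = c"
      "(\<forall>c \<in> set cs. 0 \<le> snd c \<and> snd c \<le> int (length w) + 1)"
      "(\<forall>j. Suc j < length cs \<longrightarrow> (\<exists>d.
            trans2 B (fst (cs ! j)) (tape w (snd (cs ! j))) d (fst (cs ! Suc j)) \<noteq> None
            \<and> snd (cs ! Suc j) = snd (cs ! j) + dval d))"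
      "prod_list (map (\<lambda>j. the (trans2 B (fst (cs ! j)) (tape w (snd (cs ! j)))
                          (dir_of (snd (cs ! Suc j) - snd (cs ! j))) (fst (cs ! Suc j))))
                     [0..<length cs - 1]) = y"
    using step.IH step.prems by auto
  have cs0: "cs ! 0 = (p', i + dval d)" using cs(1,2) by (simp add: hd_conv_nth)
  obtain m where m: "length cs = Suc m" using cs(1) by (cases cs) auto
  show ?case
  proof (intro exI[of _ "(p, i) # cs"] conjI)
    show "\<forall>c\<in>set ((p, i) # cs). 0 \<le> snd c \<and> snd c \<le> int (length w) + 1"
      using cs(4) step.hyps by auto
    show "last ((p, i) # cs) = c" using cs(1,3) by simp
    show "\<forall>j. Suc j < length ((p, i) # cs) \<longrightarrow> (\<exists>d.
            trans2 B (fst (((p, i) # cs) ! j)) (tape w (snd (((p, i) # cs) ! j))) d (fst (((p, i) # cs) ! Suc j)) \<noteq> None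
            \<and> snd (((p, i) # cs) ! Suc j) = snd (((p, i) # cs) ! j) + dval d)"
    proof (intro allI impI)
      fix j assume "Suc j < length ((p, i) # cs)"
      then show "\<exists>d.
            trans2 B (fst (((p, i) # cs) ! j)) (tape w (snd (((p, i) # cs) ! j))) d (fst (((p, i) # cs) ! Suc j)) \<noteq> None
            \<and> snd (((p, i) # cs) ! Suc j) = snd (((p, i) # cs) ! j) + dval d"
        using cs(5) cs0 step.hyps(1) by (cases j) auto
    qed
    show "prod_list (map (\<lambda>j. the (trans2 B (fst (((p, i) # cs) ! j)) (tape w (snd (((p, i) # cs) ! j)))
                          (dir_of (snd (((p, i) # cs) ! Suc j) - snd (((p, i) # cs) ! j))) (fst (((p, i) # cs) ! Suc j))))
                     [0..<length ((p, i) # cs) - 1]) = x * y"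
      using m cs0 step.hyps(1) cs(6) by (simp add: map_upt_Suc0 del: upt_Suc)
  qed simp_all
qed

lemma reach_comp:
  assumes "reach B w (p0, 1) (pf, int (length w) + 1) x" "wf2 A B"
    "init2 B p0 = Some a" "fin2 B pf = Some f"
  shows "\<exists>cs \<in> comps2 B w. cweight2 B w cs = a * x * f"
proof -
  obtain cs where cs: "cs \<noteq> []" "hd cs = (p0, 1)" "last cs = (pf, int (length w) + 1)"
      "(\<forall>c \<in> set cs. 0 \<le> snd c \<and> snd c \<le> int (length w) + 1)"
      "(\<forall>j. Suc j < length cs \<longrightarrow> (\<exists>d.
            trans2 B (fst (cs ! j)) (tape w (snd (cs ! j))) d (fst (cs ! Suc j)) \<noteq> None
            \<and> snd (cs ! Suc j) = snd (cs ! j) + dval d))"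
      "prod_list (map (\<lambda>j. the (trans2 B (fst (cs ! j)) (tape w (snd (cs ! j)))
                          (dir_of (snd (cs ! Suc j) - snd (cs ! j))) (fst (cs ! Suc j))))
                     [0..<length cs - 1]) = x"
    using reach_list[OF assms(1,2)] by auto
  have "cs \<in> comps2 B w" unfolding comps2_def using cs assms(3,4) by auto
  moreover have "cweight2 B w cs = a * x * f" unfolding cweight2_def using cs assms(3,4) by simp
  ultimately show ?thesis by blast
qed

lemma det_unique:
  assumes "wf2 A B" "deterministic2 B" "cs1 \<in> comps2 B w" "cs2 \<in> comps2 B w"
  shows "cs1 = cs2"
proof -
  have c1: "cs1 \<noteq> []" "snd (hd cs1) = 1" "init2 B (fst (hd cs1)) \<noteq> None"
     "snd (last cs1) = int (length w) + 1" "fin2 B (fst (last cs1)) \<noteq> None"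
     "\<forall>j. Suc j < length cs1 \<longrightarrow> (\<exists>d.
            trans2 B (fst (cs1 ! j)) (tape w (snd (cs1 ! j))) d (fst (cs1 ! Suc j)) \<noteq> None
            \<and> snd (cs1 ! Suc j) = snd (cs1 ! j) + dval d)"
    using assms(3) unfolding comps2_def by auto
  have c2: "cs2 \<noteq> []" "snd (hd cs2) = 1" "init2 B (fst (hd cs2)) \<noteq> None"
     "snd (last cs2) = int (length w) + 1" "fin2 B (fst (last cs2)) \<noteq> None"
     "\<forall>j. Suc j < length cs2 \<longrightarrow> (\<exists>d.
            trans2 B (fst (cs2 ! j)) (tape w (snd (cs2 ! j))) d (fst (cs2 ! Suc j)) \<noteq> None
            \<and> snd (cs2 ! Suc j) = snd (cs2 ! j) + dval d)"
    using assms(4) unfolding comps2_def by auto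
  have det1: "\<And>p q. init2 B p \<noteq> None \<Longrightarrow> init2 B q \<noteq> None \<Longrightarrow> p = q"
   and det2: "\<And>p a d q d' q'. trans2 B p a d q \<noteq> None \<Longrightarrow> trans2 B p a d' q' \<noteq> None \<Longrightarrow> d = d' \<and> q = q'"
   and det3: "\<And>p d q. fin2 B p \<noteq> None \<Longrightarrow> trans2 B p REnd d q = None"
    using assms(2) unfolding deterministic2_def by blast+
  have eq: "j < length cs1 \<Longrightarrow> j < length cs2 \<Longrightarrow> cs1 ! j = cs2 ! j" for j
  proof (induction j)
    case 0
    then show ?case using c1 c2 det1 by (simp add: hd_conv_nth prod_eq_iff)
  next
    case (Suc j)
    then have e: "cs1 ! j = cs2 ! j" by simp
    obtain d1 where d1: "trans2 B (fst (cs1 ! j)) (tape w (snd (cs1 ! j))) d1 (fst (cs1 ! Suc j)) \<noteq> None"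
            "snd (cs1 ! Suc j) = snd (cs1 ! j) + dval d1" using c1(6) Suc.prems by blast
    obtain d2 where d2: "trans2 B (fst (cs2 ! j)) (tape w (snd (cs2 ! j))) d2 (fst (cs2 ! Suc j)) \<noteq> None"
            "snd (cs2 ! Suc j) = snd (cs2 ! j) + dval d2" using c2(6) Suc.prems by blast
    have "d1 = d2 \<and> fst (cs1 ! Suc j) = fst (cs2 ! Suc j)" using det2 d1(1) d2(1) e by metis
    then show ?case using d1(2) d2(2) e by (simp add: prod_eq_iff)
  qed
  have nolonger: "length cs1 < length cs2 \<Longrightarrow> False" if
     cA: "cs1 \<noteq> []" "snd (last cs1) = int (length w) + 1" "fin2 B (fst (last cs1)) \<noteq> None"
     and cB: "\<forall>j. Suc j < length cs2 \<longrightarrow> (\<exists>d.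
            trans2 B (fst (cs2 ! j)) (tape w (snd (cs2 ! j))) d (fst (cs2 ! Suc j)) \<noteq> None
            \<and> snd (cs2 ! Suc j) = snd (cs2 ! j) + dval d)"
     and eqs: "\<And>j. j < length cs1 \<Longrightarrow> j < length cs2 \<Longrightarrow> cs1 ! j = cs2 ! j"
     for cs1 cs2
  proof -
    assume lt: "length cs1 < length cs2"
    let ?j = "length cs1 - 1"
    have j: "Suc ?j < length cs2" "?j < length cs1" using lt cA(1) by (cases cs1; auto)+
    have "cs1 ! ?j = cs2 ! ?j" using eqs j by simp
    moreover have "last cs1 = cs1 ! ?j" using cA(1) by (simp add: last_conv_nth)
    ultimately have e: "last cs1 = cs2 ! ?j" by simp
    obtain d where "trans2 B (fst (cs2 ! ?j)) (tape w (snd (cs2 ! ?j))) d (fst (cs2 ! Suc ?j)) \<noteq> None"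
      using cB j(1) by blast
    then show False using e cA(2,3) det3 by simp
  qed
  have "length cs1 = length cs2"
  proof (rule ccontr)
    assume "length cs1 \<noteq> length cs2"
    then consider "length cs1 < length cs2" | "length cs2 < length cs1" by linarith
    then show False
    proof cases
      case 1 then show False using nolonger[of cs1 cs2] c1 c2 eq by blast
    next
      case 2 then show False using nolonger[of cs2 cs1] c1 c2 eq by (metis)
    qed
  qed
  then show ?thesis using eq by (simp add: nth_equalityI)
qed


lemma comps2_states:
  assumes "wf2 A B" "cs \<in> comps2 B w" "c \<in> set cs"
  shows "fst c \<in> states2 B"
proof -
  obtain j where j: "j < length cs" "c = cs ! j" using assms(3) by (auto simp: in_set_conv_nth)
  show ?thesis
  proof (cases j)
    case 0
    then have "init2 B (fst c) \<noteq> None" using assms(2) j unfolding comps2_def by (auto simp: hd_conv_nth)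
    then show ?thesis using assms(1) unfolding wf2_def by blast
  next
    case (Suc j')
    then obtain d where "trans2 B (fst (cs ! j')) (tape w (snd (cs ! j'))) d (fst c) \<noteq> None"
      using assms(2) j unfolding comps2_def by blast
    then show ?thesis using assms(1) unfolding wf2_def by blast
  qed
qed

lemma comps2_map:
  fixes B :: "('q, 'a, 'k::{semiring_0, monoid_mult}) twoway" and B' :: "('r, 'a, 'k) twoway"
  assumes cs: "cs \<in> comps2 B w" and all: "\<forall>c\<in>set cs. fst c \<in> Q"
    and hi: "\<forall>p\<in>Q. init2 B' (f p) = init2 B p" and hf: "\<forall>p\<in>Q. fin2 B' (f p) = fin2 B p"
    and ht: "\<forall>p\<in>Q. \<forall>q\<in>Q. \<forall>a d. trans2 B' (f p) a d (f q) = trans2 B p a d q"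
  shows "map (apfst f) cs \<in> comps2 B' w \<and> cweight2 B' w (map (apfst f) cs) = cweight2 B w cs"
proof -
  have ne: "cs \<noteq> []" using cs unfolding comps2_def by blast
  have inQ: "\<And>j. j < length cs \<Longrightarrow> fst (cs ! j) \<in> Q" using all by simp
  have hQ: "fst (hd cs) \<in> Q" "fst (last cs) \<in> Q" using all ne by auto
  have A: "map (apfst f) cs \<in> comps2 B' w"
    unfolding comps2_def
  proof (intro CollectI conjI allI impI)
    show "map (apfst f) cs \<noteq> []" using ne by simp
    show "\<forall>c\<in>set (map (apfst f) cs). 0 \<le> snd c \<and> snd c \<le> int (length w) + 1"
      using cs unfolding comps2_def by auto
    show "snd (hd (map (apfst f) cs)) = 1" using cs ne unfolding comps2_def by (simp add: hd_map)
    show "snd (last (map (apfst f) cs)) = int (length w) + 1" using cs ne unfolding comps2_def by (simp add: last_map)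
    show "init2 B' (fst (hd (map (apfst f) cs))) \<noteq> None" using cs ne hQ hi unfolding comps2_def by (simp add: hd_map)
    show "fin2 B' (fst (last (map (apfst f) cs))) \<noteq> None" using cs ne hQ hf unfolding comps2_def by (simp add: last_map)
    fix j assume j: "Suc j < length (map (apfst f) cs)"
    then show "\<exists>d. trans2 B' (fst (map (apfst f) cs ! j)) (tape w (snd (map (apfst f) cs ! j))) d
                (fst (map (apfst f) cs ! Suc j)) \<noteq> None \<and>
               snd (map (apfst f) cs ! Suc j) = snd (map (apfst f) cs ! j) + dval d"
      using cs inQ[of j] inQ[of "Suc j"] ht unfolding comps2_def by simp
  qed
  have pl: "map (\<lambda>j. the (trans2 B' (fst (map (apfst f) cs ! j)) (tape w (snd (map (apfst f) cs ! j)))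
                          (dir_of (snd (map (apfst f) cs ! Suc j) - snd (map (apfst f) cs ! j))) (fst (map (apfst f) cs ! Suc j))))
                     [0..<length (map (apfst f) cs) - 1]
              = map (\<lambda>j. the (trans2 B (fst (cs ! j)) (tape w (snd (cs ! j)))
                          (dir_of (snd (cs ! Suc j) - snd (cs ! j))) (fst (cs ! Suc j))))
                     [0..<length cs - 1]"
  proof (rule map_cong)
    fix j assume "j \<in> set [0..<length cs - 1]"
    then have "j < length cs" "Suc j < length cs" by auto
    then show "the (trans2 B' (fst (map (apfst f) cs ! j)) (tape w (snd (map (apfst f) cs ! j)))
                          (dir_of (snd (map (apfst f) cs ! Suc j) - snd (map (apfst f) cs ! j))) (fst (map (apfst f) cs ! Suc j)))
          = the (trans2 B (fst (cs ! j)) (tape w (snd (cs ! j)))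
                          (dir_of (snd (cs ! Suc j) - snd (cs ! j))) (fst (cs ! Suc j)))"
      using inQ ht by simp
  qed simp
  have "cweight2 B' w (map (apfst f) cs) = cweight2 B w cs"
    unfolding cweight2_def pl using ne hQ hi hf by (simp add: hd_map last_map)
  then show ?thesis using A by blast
qed

lemma rename_nat:
  fixes B :: "('q, 'a, 'k::{semiring_0, monoid_mult}) twoway"
  assumes wf: "wf2 A B" and det: "deterministic2 B"
    and P: "\<forall>w\<in>lists A. finite (comps2 B w) \<and> weight2 B w = W w"
  shows "\<exists>B' :: (nat, 'a, 'k) twoway. wf2 A B' \<and> deterministic2 B'
           \<and> (\<forall>w \<in> lists A. finite (comps2 B' w) \<and> weight2 B' w = W w)"
proof -
  let ?Q = "states2 B"
  have fQ: "finite ?Q" using wf unfolding wf2_def by blast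
  obtain f :: "'q \<Rightarrow> nat" and N where f: "f ` ?Q = {i. i < N}" "inj_on f ?Q"
    using finite_imp_inj_to_nat_seg[OF fQ] by blast
  define g where "g = inv_into ?Q f"
  have gf: "\<And>p. p \<in> ?Q \<Longrightarrow> g (f p) = p" using f(2) unfolding g_def by simp
  have fg: "\<And>n. n \<in> f ` ?Q \<Longrightarrow> f (g n) = n" unfolding g_def by (simp add: f_inv_into_f)
  have gQ: "\<And>n. n \<in> f ` ?Q \<Longrightarrow> g n \<in> ?Q" unfolding g_def by (simp add: inv_into_into)
  define B' :: "(nat, 'a, 'k) twoway" where "B' = \<lparr>states2 = f ` ?Q,
      init2 = (\<lambda>n. if n \<in> f ` ?Q then init2 B (g n) else None),
      fin2 = (\<lambda>n. if n \<in> f ` ?Q then fin2 B (g n) else None),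
      trans2 = (\<lambda>n a d m. if n \<in> f ` ?Q \<and> m \<in> f ` ?Q then trans2 B (g n) a d (g m) else None)\<rparr>"
  have B'[simp]: "states2 B' = f ` ?Q"
      "\<And>n. init2 B' n = (if n \<in> f ` ?Q then init2 B (g n) else None)"
      "\<And>n. fin2 B' n = (if n \<in> f ` ?Q then fin2 B (g n) else None)"
      "\<And>n a d m. trans2 B' n a d m = (if n \<in> f ` ?Q \<and> m \<in> f ` ?Q then trans2 B (g n) a d (g m) else None)"
    unfolding B'_def by simp_all
  have wfB: "finite ?Q" "\<And>q. init2 B q \<noteq> None \<Longrightarrow> q \<in> ?Q" "\<And>q. fin2 B q \<noteq> None \<Longrightarrow> q \<in> ?Q"
     "\<And>p a d q. trans2 B p a d q \<noteq> None \<Longrightarrow> p \<in> ?Q \<and> q \<in> ?Q \<and> (\<forall>b. a = Letter b \<longrightarrow> b \<in> A)"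
     "\<And>p q. trans2 B p LEnd DL q = None" "\<And>p q. trans2 B p REnd DR q = None"
    using wf unfolding wf2_def by blast+
  have wf': "wf2 A B'"
    unfolding wf2_def using wfB by simp
  have detB: "\<And>p q. init2 B p \<noteq> None \<Longrightarrow> init2 B q \<noteq> None \<Longrightarrow> p = q"
   "\<And>p a d q d' q'. trans2 B p a d q \<noteq> None \<Longrightarrow> trans2 B p a d' q' \<noteq> None \<Longrightarrow> d = d' \<and> q = q'"
   "\<And>p d q. fin2 B p \<noteq> None \<Longrightarrow> trans2 B p REnd d q = None"
    using det unfolding deterministic2_def by blast+
  have det': "deterministic2 B'"
    unfolding deterministic2_def
  proof (intro conjI allI impI)
    fix p q assume "init2 B' p \<noteq> None" "init2 B' q \<noteq> None"
    then show "p = q" using detB(1) fg by (metis B'(2))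
  next
    fix p a d q d' q' assume "trans2 B' p a d q \<noteq> None" "trans2 B' p a d' q' \<noteq> None"
    then show "d = d'" "q = q'" using detB(2) fg by (metis B'(4))+
  next
    fix p d q assume "fin2 B' p \<noteq> None"
    then show "trans2 B' p REnd d q = None" using detB(3) by (simp split: if_splits)
  qed
  have comps: "comps2 B' w = (map (apfst f)) ` comps2 B w"
   and cw: "\<And>cs. cs \<in> comps2 B w \<Longrightarrow> cweight2 B' w (map (apfst f) cs) = cweight2 B w cs"
   and inj: "inj_on (map (apfst f)) (comps2 B w)" for w
  proof -
    have stB: "\<And>cs c. cs \<in> comps2 B w \<Longrightarrow> c \<in> set cs \<Longrightarrow> fst c \<in> ?Q"
      using comps2_states[OF wf] by blast
    have stB': "\<And>cs c. cs \<in> comps2 B' w \<Longrightarrow> c \<in> set cs \<Longrightarrow> fst c \<in> f ` ?Q"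
      using comps2_states[OF wf'] by (metis B'(1))
    have h1: "\<forall>p\<in>?Q. init2 B' (f p) = init2 B p" "\<forall>p\<in>?Q. fin2 B' (f p) = fin2 B p"
       "\<forall>p\<in>?Q. \<forall>q\<in>?Q. \<forall>a d. trans2 B' (f p) a d (f q) = trans2 B p a d q"
      using gf by auto
    have h2: "\<forall>p\<in>f`?Q. init2 B (g p) = init2 B' p" "\<forall>p\<in>f`?Q. fin2 B (g p) = fin2 B' p"
       "\<forall>p\<in>f`?Q. \<forall>q\<in>f`?Q. \<forall>a d. trans2 B (g p) a d (g q) = trans2 B' p a d q"
      by auto
    have phi: "\<And>cs. cs \<in> comps2 B w \<Longrightarrow> map (apfst f) cs \<in> comps2 B' w \<and> cweight2 B' w (map (apfst f) cs) = cweight2 B w cs"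
      using comps2_map[OF _ _ h1] stB by blast
    have psi: "\<And>cs. cs \<in> comps2 B' w \<Longrightarrow> map (apfst g) cs \<in> comps2 B w"
      using comps2_map[OF _ _ h2] stB' by blast
    have psiphi: "\<And>cs. cs \<in> comps2 B w \<Longrightarrow> map (apfst g) (map (apfst f) cs) = cs"
    proof -
      fix cs assume "cs \<in> comps2 B w"
      then have "\<forall>c\<in>set cs. fst c \<in> ?Q" using stB by blast
      then show "map (apfst g) (map (apfst f) cs) = cs" by (induction cs) (auto simp: gf apfst_def map_prod_def split: prod.splits)
    qed
    have phipsi: "\<And>cs. cs \<in> comps2 B' w \<Longrightarrow> map (apfst f) (map (apfst g) cs) = cs"
    proof -
      fix cs assume "cs \<in> comps2 B' w"
      then have "\<forall>c\<in>set cs. fst c \<in> f ` ?Q" using stB' by blast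
      then show "map (apfst f) (map (apfst g) cs) = cs" by (induction cs) (auto simp: fg apfst_def map_prod_def split: prod.splits)
    qed
    show "inj_on (map (apfst f)) (comps2 B w)" by (rule inj_onI) (metis psiphi)
    show "comps2 B' w = map (apfst f) ` comps2 B w"
    proof
      show "comps2 B' w \<subseteq> map (apfst f) ` comps2 B w" using psi phipsi by (metis image_eqI subsetI)
      show "map (apfst f) ` comps2 B w \<subseteq> comps2 B' w" using phi by blast
    qed
    show "\<And>cs. cs \<in> comps2 B w \<Longrightarrow> cweight2 B' w (map (apfst f) cs) = cweight2 B w cs" using phi by blast
  qed
  have "\<forall>w \<in> lists A. finite (comps2 B' w) \<and> weight2 B' w = W w"
  proof
    fix w assume w: "w \<in> lists A"
    have "finite (comps2 B' w)" using P w comps by simp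
    moreover have "weight2 B' w = weight2 B w"
      unfolding weight2_def comps by (simp add: sum.reindex[OF inj] cw)
    ultimately show "finite (comps2 B' w) \<and> weight2 B' w = W w" using P w by simp
  qed
  then show ?thesis using wf' det' by blast
qed


definition pre :: "('p, 'a, 'k) oneway \<Rightarrow> 'p set \<Rightarrow> 'a \<Rightarrow> 'p set" where
  "pre M t b = {p \<in> states1 M. \<exists>c\<in>t. trans1 M p b c \<noteq> None}"

fun presuf :: "('p, 'a, 'k) oneway \<Rightarrow> 'a list \<Rightarrow> 'p set \<Rightarrow> 'p set" where
  "presuf M [] t = t"
| "presuf M (b # v) t = pre M (presuf M v t) b"

definition Fset :: "('p, 'a, 'k) oneway \<Rightarrow> 'p set" where
  "Fset M = {p \<in> states1 M. fin1 M p \<noteq> None}"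

definition suf :: "('p, 'a, 'k) oneway \<Rightarrow> 'a list \<Rightarrow> 'p set" where
  "suf M v = presuf M v (Fset M)"

fun mpath :: "('p, 'a, 'k) oneway \<Rightarrow> 'a list \<Rightarrow> 'p list \<Rightarrow> bool" where
  "mpath M [] [p] = True"
| "mpath M (a # v) (p # c # rest) = (trans1 M p a c \<noteq> None \<and> mpath M v (c # rest))"
| "mpath M _ _ = False"

lemma mpath_iff: "mpath M v ps \<longleftrightarrow> length ps = Suc (length v) \<and> (\<forall>i<length v. trans1 M (ps ! i) (v ! i) (ps ! Suc i) \<noteq> None)"
proof (induction v arbitrary: ps)
  case Nil
  then show ?case by (cases ps; cases "tl ps") auto
next
  case (Cons a v)
  show ?case
  proof (cases ps)
    case Nil then show ?thesis by simp
  next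
    case (Cons p ps')
    show ?thesis
    proof (cases ps')
      case Nil then show ?thesis using Cons by simp
    next
      case (Cons c rest)
      then show ?thesis using \<open>ps = p # ps'\<close> Cons.IH[of "c # rest"] by (auto simp: All_less_Suc2)
    qed
  qed
qed

lemma mpath_Nil_iff: "mpath M [] ps \<longleftrightarrow> (\<exists>p. ps = [p])"
  by (cases ps; cases "tl ps") auto

lemma mpath_Cons_iff: "mpath M (a # v) ps \<longleftrightarrow> (\<exists>p c rest. ps = p # c # rest \<and> trans1 M p a c \<noteq> None \<and> mpath M v (c # rest))"
  by (cases ps; cases "tl ps") auto

lemma comps1_alt: "comps1 M w = {ps. mpath M w ps \<and> init1 M (hd ps) \<noteq> None \<and> fin1 M (last ps) \<noteq> None}"
  unfolding comps1_def mpath_iff by auto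

lemma mpath_ne: "mpath M v ps \<Longrightarrow> ps \<noteq> []"
  by (auto simp: mpath_iff)

lemma pre_sub: "pre M t b \<subseteq> states1 M" unfolding pre_def by auto

lemma presuf_sub: "t \<subseteq> states1 M \<Longrightarrow> presuf M v t \<subseteq> states1 M"
  by (cases v) (auto simp: pre_sub)

lemma Fset_sub: "Fset M \<subseteq> states1 M" unfolding Fset_def by auto

lemma suf_sub: "suf M v \<subseteq> states1 M" unfolding suf_def by (rule presuf_sub[OF Fset_sub])

lemma presuf_append: "presuf M (u @ v) t = presuf M u (presuf M v t)"
  by (induction u) auto

lemma presuf_snoc: "presuf M (u @ [b]) t = presuf M u (pre M t b)"
  by (simp add: presuf_append)

lemma presuf_char:
  assumes wf: "wf1 A M" and t: "t \<subseteq> states1 M"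
  shows "p \<in> presuf M v t \<longleftrightarrow> (\<exists>ps. mpath M v ps \<and> hd ps = p \<and> last ps \<in> t)"
proof (induction v arbitrary: p)
  case Nil
  show ?case
  proof
    assume "p \<in> presuf M [] t" then show "\<exists>ps. mpath M [] ps \<and> hd ps = p \<and> last ps \<in> t"
      by (intro exI[of _ "[p]"]) simp
  next
    assume "\<exists>ps. mpath M [] ps \<and> hd ps = p \<and> last ps \<in> t"
    then obtain ps where "mpath M [] ps" "hd ps = p" "last ps \<in> t" by blast
    then show "p \<in> presuf M [] t" by (auto simp: mpath_Nil_iff)
  qed
next
  case (Cons b v)
  show ?case
  proof
    assume "p \<in> presuf M (b # v) t"
    then obtain c where c: "p \<in> states1 M" "c \<in> presuf M v t" "trans1 M p b c \<noteq> None"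
      by (auto simp: pre_def)
    then obtain ps where ps: "mpath M v ps" "hd ps = c" "last ps \<in> t" using Cons.IH by blast
    then obtain rest where "ps = c # rest" using mpath_ne by (cases ps) auto
    then show "\<exists>ps. mpath M (b # v) ps \<and> hd ps = p \<and> last ps \<in> t"
      using ps c by (intro exI[of _ "p # ps"]) auto
  next
    assume "\<exists>ps. mpath M (b # v) ps \<and> hd ps = p \<and> last ps \<in> t"
    then obtain ps where ps: "mpath M (b # v) ps" "hd ps = p" "last ps \<in> t" by blast
    then obtain c rest where e: "ps = p # c # rest" by (auto simp: mpath_Cons_iff)
    then have "trans1 M p b c \<noteq> None" "mpath M v (c # rest)" using ps by auto
    moreover have "p \<in> states1 M" using wf \<open>trans1 M p b c \<noteq> None\<close> unfolding wf1_def by blast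
    moreover have "c \<in> presuf M v t" using Cons.IH \<open>mpath M v (c # rest)\<close> ps(3) e by fastforce
    ultimately show "p \<in> presuf M (b # v) t" by (auto simp: pre_def)
  qed
qed

lemma suf_char:
  assumes wf: "wf1 A M"
  shows "p \<in> suf M v \<longleftrightarrow> (\<exists>ps. mpath M v ps \<and> hd ps = p \<and> fin1 M (last ps) \<noteq> None)"
proof -
  have "\<And>q. fin1 M q \<noteq> None \<Longrightarrow> q \<in> states1 M" using wf unfolding wf1_def by blast
  then show ?thesis unfolding suf_def presuf_char[OF wf Fset_sub] by (auto simp: Fset_def)
qed

lemma mpath_append: "mpath M u xs \<Longrightarrow> mpath M v ys \<Longrightarrow> last xs = hd ys \<Longrightarrow> mpath M (u @ v) (xs @ tl ys)"
proof (induction u arbitrary: xs)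
  case Nil
  then obtain x where "xs = [x]" by (auto simp: mpath_Nil_iff)
  then show ?case using Nil mpath_ne[OF Nil(2)] by (cases ys) auto
next
  case (Cons a u)
  then obtain p c rest where e: "xs = p # c # rest" by (auto simp: mpath_Cons_iff)
  have "mpath M (u @ v) ((c # rest) @ tl ys)"
    by (rule Cons.IH) (use Cons.prems e in auto)
  then show ?case using Cons.prems e by auto
qed

lemma mpath_take: "mpath M v ps \<Longrightarrow> k \<le> length v \<Longrightarrow> mpath M (take k v) (take (Suc k) ps)"
  unfolding mpath_iff by (simp add: min_def)

lemma mpath_drop: "mpath M v ps \<Longrightarrow> k \<le> length v \<Longrightarrow> mpath M (drop k v) (drop k ps)"
  unfolding mpath_iff by (simp add: add.commute)

lemma no_run:
  assumes "wf1 A M" "comps1 M w = {}" "init1 M q \<noteq> None" "q \<in> suf M w"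
  shows False
proof -
  obtain ps where "mpath M w ps" "hd ps = q" "fin1 M (last ps) \<noteq> None" using assms(4) unfolding suf_char[OF assms(1)] by blast
  then have "ps \<in> comps1 M w" using assms(3) unfolding comps1_alt by auto
  then show False using assms(2) by blast
qed

locale run_ctx =
  fixes A :: "'a set" and M :: "('p, 'a, 'k::{semiring_0, monoid_mult}) oneway" and w :: "'a list" and qs :: "'p list"
  assumes wf: "wf1 A M" and un: "unambiguous1 A M" and w: "w \<in> lists A" and qs: "qs \<in> comps1 M w"
begin

lemma uniq: "ps \<in> comps1 M w \<Longrightarrow> ps = qs"
  using un w qs unfolding unambiguous1_def by blast

lemma qs_mpath: "mpath M w qs" and qs_len: "length qs = Suc (length w)"
  and qs_init: "init1 M (hd qs) \<noteq> None" and qs_fin: "fin1 M (last qs) \<noteq> None"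
  using qs unfolding comps1_alt by (auto simp: mpath_iff)

lemma qs_trans: "k < length w \<Longrightarrow> trans1 M (qs ! k) (w ! k) (qs ! Suc k) \<noteq> None"
  using qs unfolding comps1_def by blast

lemma F1: "k \<le> length w \<Longrightarrow> qs ! k \<in> suf M (drop k w)"
proof -
  assume k: "k \<le> length w"
  have "mpath M (drop k w) (drop k qs)" using mpath_drop[OF qs_mpath k] .
  moreover have "hd (drop k qs) = qs ! k" using k qs_len by (simp add: hd_drop_conv_nth)
  moreover have "last (drop k qs) = last qs" using k qs_len by simp
  ultimately show ?thesis unfolding suf_char[OF wf] using qs_fin by (intro exI[of _ "drop k qs"]) simp
qed

lemma qs_S1: "k \<le> length w \<Longrightarrow> qs ! k \<in> states1 M"
  using F1[of k] suf_sub[of M "drop k w"] by blast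

lemma F2: "init1 M q \<noteq> None \<Longrightarrow> q \<in> suf M w \<Longrightarrow> q = qs ! 0"
proof -
  assume a: "init1 M q \<noteq> None" "q \<in> suf M w"
  obtain ps where ps: "mpath M w ps" "hd ps = q" "fin1 M (last ps) \<noteq> None" using a(2) unfolding suf_char[OF wf] by blast
  then have "ps \<in> comps1 M w" using a(1) unfolding comps1_alt by auto
  then have "ps = qs" by (rule uniq)
  then show ?thesis using ps(2) qs_len by (cases qs) auto
qed

lemma F3:
  assumes k: "k < length w" and c: "trans1 M (qs ! k) (w ! k) c \<noteq> None" "c \<in> suf M (drop (Suc k) w)"
  shows "c = qs ! Suc k"
proof -
  obtain ps' where ps': "mpath M (drop (Suc k) w) ps'" "hd ps' = c" "fin1 M (last ps') \<noteq> None"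
    using c(2) unfolding suf_char[OF wf] by blast
  obtain rest where e: "ps' = c # rest" using mpath_ne[OF ps'(1)] ps'(2) by (cases ps') auto
  have m1: "mpath M (take k w) (take (Suc k) qs)" using mpath_take[OF qs_mpath] k by simp
  have m2: "mpath M (w ! k # drop (Suc k) w) (qs ! k # ps')" using e ps'(1) c(1) by simp
  have l1: "last (take (Suc k) qs) = qs ! k" using k qs_len by (simp add: take_Suc_conv_app_nth)
  have "mpath M (take k w @ w ! k # drop (Suc k) w) (take (Suc k) qs @ ps')"
    using mpath_append[OF m1 m2] l1 by simp
  moreover have "take k w @ w ! k # drop (Suc k) w = w" using k by (metis id_take_nth_drop)
  ultimately have mp: "mpath M w (take (Suc k) qs @ ps')" by simp
  have "hd (take (Suc k) qs @ ps') = hd qs" using qs_len by (cases qs) auto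
  moreover have "last (take (Suc k) qs @ ps') = last ps'" using e by simp
  ultimately have "take (Suc k) qs @ ps' \<in> comps1 M w" using mp qs_init ps'(3) unfolding comps1_alt by auto
  then have "take (Suc k) qs @ ps' = qs" by (rule uniq)
  then have "qs ! Suc k = (take (Suc k) qs @ ps') ! Suc k" by simp
  also have "\<dots> = c" using e k qs_len by (simp add: nth_append)
  finally show ?thesis by simp
qed

end


datatype 'p st = GoR | Back "'p set" | Run 'p "'p set" | Ex 'p "'p set \<Rightarrow> 'p set set"
  | Ret 'p "'p set" "'p set \<Rightarrow> 'p set set"

definition Dset :: "('p, 'a, 'k) oneway \<Rightarrow> 'p set \<Rightarrow> 'a \<Rightarrow> 'p set set" where
  "Dset M S b = {s. s \<subseteq> states1 M \<and> pre M s b = S}"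

definition nxt :: "('p, 'a, 'k) oneway \<Rightarrow> 'p \<Rightarrow> 'a \<Rightarrow> 'p set \<Rightarrow> (dir \<times> 'p st \<times> 'k) option" where
  "nxt M q b s = (if \<exists>!c. trans1 M q b c \<noteq> None \<and> c \<in> s
      then (let c = THE c. trans1 M q b c \<noteq> None \<and> c \<in> s in Some (DR, Run c s, the (trans1 M q b c)))
      else None)"

definition exstep :: "('p, 'a, 'k) oneway \<Rightarrow> ('p set \<Rightarrow> 'p set set) \<Rightarrow> 'a \<Rightarrow> 'p set \<Rightarrow> 'p set set" where
  "exstep M T b = (\<lambda>s. {t. t \<subseteq> states1 M \<and> pre M t b \<in> T s})"

definition imgstep :: "('p, 'a, 'k) oneway \<Rightarrow> ('p set \<Rightarrow> 'p set set) \<Rightarrow> 'a \<Rightarrow> 'p set \<Rightarrow> 'p set set" where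
  "imgstep M U b = (\<lambda>s. (\<lambda>t. pre M t b) ` U s)"

definition two_ne :: "('p set \<Rightarrow> 'p set set) \<Rightarrow> bool" where
  "two_ne T = (\<exists>s1 s2. s1 \<noteq> s2 \<and> T s1 \<noteq> {} \<and> T s2 \<noteq> {})"

definition merges :: "('p set \<Rightarrow> 'p set set) \<Rightarrow> bool" where
  "merges U = (\<exists>s1 s2. s1 \<noteq> s2 \<and> U s1 \<inter> U s2 \<noteq> {})"

fun delta :: "('p, 'a, 'k::{semiring_0, monoid_mult}) oneway \<Rightarrow> 'p st \<Rightarrow> 'a marked \<Rightarrow> (dir \<times> 'p st \<times> 'k) option" where
  "delta M GoR (Letter b) = Some (DR, GoR, 1)"
| "delta M GoR REnd = Some (DL, Back (Fset M), 1)"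
| "delta M (Back S) (Letter b) = Some (DL, Back (pre M S b), 1)"
| "delta M (Back S) LEnd = (if \<exists>!q. init1 M q \<noteq> None \<and> q \<in> S
      then (let q = THE q. init1 M q \<noteq> None \<and> q \<in> S in Some (DR, Run q S, the (init1 M q))) else None)"
| "delta M (Run q S) (Letter b) = (if \<exists>s1 s2. s1 \<in> Dset M S b \<and> s2 \<in> Dset M S b \<and> s1 \<noteq> s2
      then Some (DR, Ex q (\<lambda>s. if s \<in> Dset M S b then {s} else {}), 1)
      else if \<exists>s. Dset M S b = {s} then nxt M q b (THE s. Dset M S b = {s}) else None)"
| "delta M (Ex q T) (Letter b) = (if two_ne (exstep M T b) then Some (DR, Ex q (exstep M T b), 1)
      else if \<exists>!s. exstep M T b s \<noteq> {} then Some (DL, Ret q (THE s. exstep M T b s \<noteq> {}) T, 1) else None)"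
| "delta M (Ex q T) REnd = (if \<exists>!s. Fset M \<in> T s then Some (DL, Ret q (THE s. Fset M \<in> T s) T, 1) else None)"
| "delta M (Ret q r U) (Letter b) = (if merges (imgstep M U b) then nxt M q b r
      else Some (DL, Ret q r (imgstep M U b), 1))"
| "delta M _ _ = None"

definition gval :: "('p, 'a, 'k) oneway \<Rightarrow> ('p set \<Rightarrow> 'p set set) \<Rightarrow> bool" where
  "gval M T = (\<forall>s. T s \<subseteq> Pow (states1 M) \<and> (\<not> s \<subseteq> states1 M \<longrightarrow> T s = {}))"

fun vst :: "('p, 'a, 'k) oneway \<Rightarrow> 'p st \<Rightarrow> bool" where
  "vst M GoR = True"
| "vst M (Back S) = (S \<subseteq> states1 M)"
| "vst M (Run q S) = (q \<in> states1 M \<and> S \<subseteq> states1 M)"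
| "vst M (Ex q T) = (q \<in> states1 M \<and> gval M T)"
| "vst M (Ret q r U) = (q \<in> states1 M \<and> r \<subseteq> states1 M \<and> gval M U)"

definition Bc :: "'a set \<Rightarrow> ('p, 'a, 'k::{semiring_0, monoid_mult}) oneway \<Rightarrow> ('p st, 'a, 'k) twoway" where
  "Bc A M = \<lparr>states2 = {x. vst M x},
     init2 = (\<lambda>x. if x = GoR then Some 1 else None),
     fin2 = (\<lambda>x. if vst M x then (case x of Run q S \<Rightarrow> fin1 M q | _ \<Rightarrow> None) else None),
     trans2 = (\<lambda>x a d y. if vst M x \<and> (\<forall>b. a = Letter b \<longrightarrow> b \<in> A)
        then (case delta M x a of Some (d', y', k) \<Rightarrow> if d = d' \<and> y = y' then Some k else None | None \<Rightarrow> None)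
        else None)\<rparr>"

lemma Bc_simps:
  "states2 (Bc A M) = {x. vst M x}"
  "init2 (Bc A M) x = (if x = GoR then Some 1 else None)"
  "fin2 (Bc A M) x = (if vst M x then (case x of Run q S \<Rightarrow> fin1 M q | _ \<Rightarrow> None) else None)"
  "trans2 (Bc A M) x a d y = (if vst M x \<and> (\<forall>b. a = Letter b \<longrightarrow> b \<in> A)
        then (case delta M x a of Some (d', y', k) \<Rightarrow> if d = d' \<and> y = y' then Some k else None | None \<Rightarrow> None)
        else None)"
  unfolding Bc_def by simp_all

lemma gval_finite:
  assumes "finite (states1 M)"
  shows "finite {T. gval M T}"
proof -
  have "{T. gval M T} \<subseteq> {f. \<forall>x. (x \<in> Pow (states1 M) \<longrightarrow> f x \<in> Pow (Pow (states1 M))) \<and> (x \<notin> Pow (states1 M) \<longrightarrow> f x = {})}"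
    unfolding gval_def by auto
  moreover have "finite {f. \<forall>x. (x \<in> Pow (states1 M) \<longrightarrow> f x \<in> Pow (Pow (states1 M))) \<and> (x \<notin> Pow (states1 M) \<longrightarrow> f x = {})}"
    by (rule finite_set_of_finite_funs) (use assms in auto)
  ultimately show ?thesis by (rule finite_subset)
qed

lemma vst_finite:
  assumes "finite (states1 M)"
  shows "finite {x. vst M x}"
proof -
  let ?S = "states1 M" and ?G = "{T. gval M T}"
  have "{x. vst M x} \<subseteq> {GoR} \<union> Back ` Pow ?S \<union> (\<lambda>(q, S). Run q S) ` (?S \<times> Pow ?S)
      \<union> (\<lambda>(q, T). Ex q T) ` (?S \<times> ?G) \<union> (\<lambda>(q, r, U). Ret q r U) ` (?S \<times> Pow ?S \<times> ?G)"
  proof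
    fix x assume "x \<in> {x. vst M x}"
    then show "x \<in> {GoR} \<union> Back ` Pow ?S \<union> (\<lambda>(q, S). Run q S) ` (?S \<times> Pow ?S)
      \<union> (\<lambda>(q, T). Ex q T) ` (?S \<times> ?G) \<union> (\<lambda>(q, r, U). Ret q r U) ` (?S \<times> Pow ?S \<times> ?G)"
      by (cases x) (auto simp: image_iff)
  qed
  moreover have "finite ({GoR} \<union> Back ` Pow ?S \<union> (\<lambda>(q, S). Run q S) ` (?S \<times> Pow ?S)
      \<union> (\<lambda>(q, T). Ex q T) ` (?S \<times> ?G) \<union> (\<lambda>(q, r, U). Ret q r U) ` (?S \<times> Pow ?S \<times> ?G))"
    using assms gval_finite[OF assms] by simp
  ultimately show ?thesis by (rule finite_subset)
qed

lemma nxt_vst: "nxt M q b s = Some (d, y, k) \<Longrightarrow> wf1 A M \<Longrightarrow> s \<subseteq> states1 M \<Longrightarrow> vst M y"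
proof -
  assume a: "nxt M q b s = Some (d, y, k)" "wf1 A M" "s \<subseteq> states1 M"
  then have ex: "\<exists>!c. trans1 M q b c \<noteq> None \<and> c \<in> s" unfolding nxt_def by (auto split: if_splits)
  let ?c = "THE c. trans1 M q b c \<noteq> None \<and> c \<in> s"
  have c: "trans1 M q b ?c \<noteq> None \<and> ?c \<in> s" using theI'[OF ex] .
  have "y = Run ?c s" using a(1) ex unfolding nxt_def by (simp add: Let_def)
  then show ?thesis using c a(3) by auto
qed

lemma gval_img: "gval M U \<Longrightarrow> gval M (imgstep M U b)"
  unfolding gval_def imgstep_def using pre_sub by fastforce

lemma gval_ex: "gval M T \<Longrightarrow> gval M (exstep M T b)"
  unfolding gval_def exstep_def by auto

lemma delta_vst:
  assumes wf: "wf1 A M" and v: "vst M x" and dl: "delta M x a = Some (d, y, k)"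
  shows "vst M y"
proof (cases x)
  case GoR
  then show ?thesis using dl Fset_sub[of M] by (cases a) auto
next
  case (Back S)
  show ?thesis
  proof (cases a)
    case LEnd
    then have ex: "\<exists>!q. init1 M q \<noteq> None \<and> q \<in> S" using dl Back by (auto split: if_splits)
    let ?q = "THE q. init1 M q \<noteq> None \<and> q \<in> S"
    have "init1 M ?q \<noteq> None \<and> ?q \<in> S" using theI'[OF ex] .
    moreover have "y = Run ?q S" using dl Back LEnd ex by (simp add: Let_def)
    ultimately show ?thesis using v Back by auto
  qed (use dl Back pre_sub[of M] in auto)
next
  case (Run q S)
  show ?thesis
  proof (cases a)
    case (Letter b)
    show ?thesis
    proof (cases "\<exists>s1 s2. s1 \<in> Dset M S b \<and> s2 \<in> Dset M S b \<and> s1 \<noteq> s2")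
      case True
      then have "y = Ex q (\<lambda>s. if s \<in> Dset M S b then {s} else {})" using dl Run Letter by simp
      then show ?thesis using v Run by (auto simp: gval_def Dset_def)
    next
      case False
      have "delta M (Run q S) (Letter b) = (if \<exists>s. Dset M S b = {s} then nxt M q b (THE s. Dset M S b = {s}) else None)"
        unfolding delta.simps using False by (rule if_not_P)
      then have dl': "(if \<exists>s. Dset M S b = {s} then nxt M q b (THE s. Dset M S b = {s}) else None) = Some (d, y, k)"
        using dl Run Letter by simp
      then have ex: "\<exists>s. Dset M S b = {s}" by (cases "\<exists>s. Dset M S b = {s}") auto
      then obtain s0 where s0: "Dset M S b = {s0}" by blast
      then have th: "(THE s. Dset M S b = {s}) = s0" by simp
      have n: "nxt M q b s0 = Some (d, y, k)" using dl' ex th by simp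
      have "s0 \<subseteq> states1 M" using s0 unfolding Dset_def by blast
      then show ?thesis using nxt_vst[OF n wf] by blast
    qed
  qed (use dl Run in auto)
next
  case (Ex q T)
  show ?thesis
  proof (cases a)
    case (Letter b)
    show ?thesis
    proof (cases "two_ne (exstep M T b)")
      case True
      then show ?thesis using dl Ex Letter v gval_ex by auto
    next
      case False
      then have ex: "\<exists>!s. exstep M T b s \<noteq> {}" and y: "y = Ret q (THE s. exstep M T b s \<noteq> {}) T"
        using dl Ex Letter by (auto split: if_splits)
      have "exstep M T b (THE s. exstep M T b s \<noteq> {}) \<noteq> {}" using theI'[OF ex] .
      moreover have "gval M (exstep M T b)" using gval_ex[of M T b] v Ex by simp
      ultimately have "(THE s. exstep M T b s \<noteq> {}) \<subseteq> states1 M"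
        unfolding gval_def by blast
      then show ?thesis using y v Ex by simp
    qed
  next
    case REnd
    then have ex: "\<exists>!s. Fset M \<in> T s" and y: "y = Ret q (THE s. Fset M \<in> T s) T"
      using dl Ex by (auto split: if_splits)
    have "Fset M \<in> T (THE s. Fset M \<in> T s)" using theI'[OF ex] .
    moreover have "gval M T" using v Ex by simp
    ultimately have "(THE s. Fset M \<in> T s) \<subseteq> states1 M" unfolding gval_def by blast
    then show ?thesis using y v Ex by simp
  qed (use dl Ex in auto)
next
  case (Ret q r U)
  show ?thesis
  proof (cases a)
    case (Letter b)
    show ?thesis
    proof (cases "merges (imgstep M U b)")
      case True
      then show ?thesis using dl Ret Letter v nxt_vst[OF _ wf, of q b r d y k] by auto
    next
      case False
      then show ?thesis using dl Ret Letter v gval_img by auto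
    qed
  qed (use dl Ret in auto)
qed

lemma delta_LEnd: "delta M x LEnd = Some (d, y, k) \<Longrightarrow> d = DR"
  by (cases x) (auto simp: Let_def split: if_splits)

lemma delta_REnd: "delta M x REnd = Some (d, y, k) \<Longrightarrow> d = DL"
  by (cases x) (auto simp: Let_def split: if_splits)

lemma Bc_wf:
  assumes "wf1 A M"
  shows "wf2 A (Bc A M)"
proof -
  have fin: "finite (states1 M)" using assms unfolding wf1_def by blast
  have t: "vst M p \<and> vst M q \<and> (\<forall>b. a = Letter b \<longrightarrow> b \<in> A)" if h: "trans2 (Bc A M) p a d q \<noteq> None" for p a d q
  proof -
    have v: "vst M p" and l: "\<forall>b. a = Letter b \<longrightarrow> b \<in> A" using h unfolding Bc_simps by (auto split: if_splits)
    obtain k where "delta M p a = Some (d, q, k)" using h v l unfolding Bc_simps by (auto split: if_splits option.splits)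
    then have "vst M q" using delta_vst[OF assms v] by blast
    then show ?thesis using v l by simp
  qed
  have l: "trans2 (Bc A M) p LEnd DL q = None" for p q
    using delta_LEnd[of M p] unfolding Bc_simps by (auto split: option.splits)
  have r: "trans2 (Bc A M) p REnd DR q = None" for p q
    using delta_REnd[of M p] unfolding Bc_simps by (auto split: option.splits)
  show ?thesis unfolding wf2_def Bc_simps(1,2,3) using t l r vst_finite[OF fin] by (auto split: if_splits)
qed

lemma Bc_det: "deterministic2 (Bc A M)"
  unfolding deterministic2_def Bc_simps
  by (auto split: if_splits option.splits st.splits)

lemma tape_letter_in:
  assumes "w \<in> lists A" "0 \<le> i" "i \<le> int (length w) + 1" "tape w i = Letter b"
  shows "b \<in> A"
proof -
  have "i \<noteq> 0" "i \<noteq> int (length w) + 1" using assms(4) by (auto simp: tape_def)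
  then have "nat (i - 1) < length w" "b = w ! nat (i - 1)" using assms(2,3,4) by (auto simp: tape_def)
  then show ?thesis using assms(1) by (metis in_listsD nth_mem)
qed

lemma reach_d:
  assumes "vst M p" "w \<in> lists A" "0 \<le> i" "i \<le> int (length w) + 1"
    "delta M p (tape w i) = Some (d, p', x)" "reach (Bc A M) w (p', i + dval d) c y"
  shows "reach (Bc A M) w (p, i) c (x * y)"
proof (rule reach.step[OF _ assms(3,4,6)])
  have "\<forall>b. tape w i = Letter b \<longrightarrow> b \<in> A" using tape_letter_in[OF assms(2,3,4)] by blast
  then show "trans2 (Bc A M) p (tape w i) d p' = Some x" using assms(1,5) unfolding Bc_simps by simp
qed



lemma reach_d':
  assumes "vst M p" "w \<in> lists A" "0 \<le> i" "i \<le> int (length w) + 1"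
    "delta M p (tape w i) = Some (d, p', x)" "j = i + dval d" "reach (Bc A M) w (p', j) c y" "z = x * y"
  shows "reach (Bc A M) w (p, i) c z"
  using reach_d[OF assms(1-5)] assms(6-8) by simp

lemma tape_Suc2: "k < length w \<Longrightarrow> tape w (1 + int k) = Letter (w ! k)"
  using tape_Suc[of k w] by simp

lemmas tape_Sucs = tape_Suc tape_Suc2

lemma tape_end''[simp]: "tape w (1 + int (length w)) = REnd" by (simp add: tape_def)

lemma suf_mem: assumes "x \<in> suf M v" shows "x \<in> states1 M" using suf_sub[of M v] assms by blast
lemma pre_mem: assumes "x \<in> pre M t b" shows "x \<in> states1 M" using pre_sub[of M t b] assms by blast

lemma suf_drop: "k < length w \<Longrightarrow> suf M (drop k w) = pre M (suf M (drop (Suc k) w)) (w ! k)"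
  unfolding suf_def by (simp add: Cons_nth_drop_Suc[symmetric])

context run_ctx
begin

abbreviation "n \<equiv> length w"

lemma L_GoR:
  assumes "k \<le> Suc n" "1 \<le> k"
  shows "reach (Bc A M) w (GoR, int k) (GoR, int (Suc n)) 1"
  using assms
proof (induction k rule: inc_induct)
  case base
  show ?case by (rule reach.refl)
next
  case (step m)
  then obtain m' where m': "m = Suc m'" "m' < n" by (cases m) auto
  show ?case
  proof (rule reach_d'[where d = DR and p' = GoR and x = 1 and y = 1 and j = "int (Suc m)"])
    show "delta M GoR (tape w (int m)) = Some (DR, GoR, 1)" using m' by (simp add: tape_Sucs)
    show "reach (Bc A M) w (GoR, int (Suc m)) (GoR, int (Suc n)) 1" using step by simp
  qed (use w step in auto)
qed

lemma L_Back:
  assumes "k \<le> n"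
  shows "reach (Bc A M) w (Back (suf M (drop k w)), int k) (Back (suf M w), 0) 1"
  using assms
proof (induction k)
  case 0
  then show ?case using reach.refl by simp
next
  case (Suc k)
  show ?case
  proof (rule reach_d'[where d = DL and p' = "Back (suf M (drop k w))" and x = 1 and y = 1 and j = "int k"])
    show "delta M (Back (suf M (drop (Suc k) w))) (tape w (int (Suc k))) = Some (DL, Back (suf M (drop k w)), 1)"
      using Suc.prems by (simp add: tape_Sucs suf_drop)
    show "vst M (Back (suf M (drop (Suc k) w)))" using suf_sub by simp
  qed (use w Suc in auto)
qed

lemma L_start:
  "reach (Bc A M) w (Back (suf M w), 0) (Run (qs ! 0) (suf M w), 1) (the (init1 M (qs ! 0)))"
proof -
  have q0: "init1 M (qs ! 0) \<noteq> None \<and> qs ! 0 \<in> suf M w"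
    using qs_init F1[of 0] qs_len by (cases qs) auto
  have ex: "\<exists>!q. init1 M q \<noteq> None \<and> q \<in> suf M w" using q0 F2 by blast
  have th: "(THE q. init1 M q \<noteq> None \<and> q \<in> suf M w) = qs ! 0" using q0 F2 by blast
  show ?thesis
  proof (rule reach_d'[where d = DR and p' = "Run (qs ! 0) (suf M w)" and x = "the (init1 M (qs ! 0))" and y = 1 and j = 1])
    show "delta M (Back (suf M w)) (tape w 0) = Some (DR, Run (qs ! 0) (suf M w), the (init1 M (qs ! 0)))"
      using ex th by (simp add: Let_def)
  qed (use w suf_sub[of M w] reach.refl in auto)
qed

definition g :: "nat \<Rightarrow> 'k" where "g k = the (trans1 M (qs ! k) (w ! k) (qs ! Suc k))"

lemma nxt_ok:
  assumes k: "k < n"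
  shows "nxt M (qs ! k) (w ! k) (suf M (drop (Suc k) w)) = Some (DR, Run (qs ! Suc k) (suf M (drop (Suc k) w)), g k)"
proof -
  let ?r = "suf M (drop (Suc k) w)"
  have c: "trans1 M (qs ! k) (w ! k) (qs ! Suc k) \<noteq> None \<and> qs ! Suc k \<in> ?r"
    using qs_trans[OF k] F1[of "Suc k"] k by simp
  have ex: "\<exists>!c. trans1 M (qs ! k) (w ! k) c \<noteq> None \<and> c \<in> ?r" using c F3[OF k] by blast
  have th: "(THE c. trans1 M (qs ! k) (w ! k) c \<noteq> None \<and> c \<in> ?r) = qs ! Suc k" using c F3[OF k] by blast
  show ?thesis unfolding nxt_def using ex th by (simp add: Let_def g_def)
qed

end

locale step_ctx = run_ctx +
  fixes k :: nat
  assumes k: "k < length w"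
begin

definition "S = suf M (drop k w)"
definition "r = suf M (drop (Suc k) w)"
definition "D = Dset M S (w ! k)"
definition "seg j = take (j - Suc k) (drop (Suc k) w)"
definition "Tj j = (\<lambda>s. if s \<in> D then {t. t \<subseteq> states1 M \<and> presuf M (seg j) t = s} else {})"

lemma r_in_D: "r \<in> D"
  unfolding D_def Dset_def r_def S_def using suf_sub[of M "drop (Suc k) w"] suf_drop[OF k, of M] by simp

lemma r_sub: "r \<subseteq> states1 M" unfolding r_def by (rule suf_sub)

lemma seg_Suc: "Suc k \<le> j \<Longrightarrow> j < n \<Longrightarrow> seg (Suc j) = seg j @ [w ! j]"
proof -
  assume a: "Suc k \<le> j" "j < n"
  have e: "Suc j - Suc k = Suc (j - Suc k)" using a by simp
  have "j - Suc k < length (drop (Suc k) w)" using a by simp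
  then have "take (Suc (j - Suc k)) (drop (Suc k) w) = take (j - Suc k) (drop (Suc k) w) @ [drop (Suc k) w ! (j - Suc k)]"
    by (rule take_Suc_conv_app_nth)
  moreover have "drop (Suc k) w ! (j - Suc k) = w ! j" using a by simp
  ultimately show ?thesis unfolding seg_def e by simp
qed

lemma seg_app: "Suc k \<le> j \<Longrightarrow> j \<le> n \<Longrightarrow> seg j @ drop j w = drop (Suc k) w"
proof -
  assume a: "Suc k \<le> j" "j \<le> n"
  have "drop (j - Suc k) (drop (Suc k) w) = drop j w" using a by simp
  then show ?thesis unfolding seg_def by (metis append_take_drop_id)
qed

lemma E0: "Tj (Suc k) = (\<lambda>s. if s \<in> D then {s} else {})"
proof
  fix s show "Tj (Suc k) s = (if s \<in> D then {s} else {})"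
    unfolding Tj_def seg_def D_def Dset_def by auto
qed

lemma E1: "Suc k \<le> j \<Longrightarrow> j < n \<Longrightarrow> exstep M (Tj j) (w ! j) = Tj (Suc j)"
proof
  fix s assume a: "Suc k \<le> j" "j < n"
  show "exstep M (Tj j) (w ! j) s = Tj (Suc j) s"
    unfolding exstep_def Tj_def seg_Suc[OF a] presuf_snoc by (auto dest: pre_mem)
qed

lemma E2: "Suc k \<le> j \<Longrightarrow> j \<le> n \<Longrightarrow> suf M (drop j w) \<in> Tj j r"
proof -
  assume a: "Suc k \<le> j" "j \<le> n"
  have "presuf M (seg j) (suf M (drop j w)) = r"
    unfolding r_def suf_def presuf_append[symmetric] seg_app[OF a] ..
  then show ?thesis unfolding Tj_def using r_in_D suf_sub by simp
qed

lemma E3: "t \<in> Tj j s1 \<Longrightarrow> t \<in> Tj j s2 \<Longrightarrow> s1 = s2"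
  unfolding Tj_def by (auto split: if_splits)

lemma gvalT: "gval M (Tj j)"
  unfolding gval_def Tj_def D_def Dset_def by auto

lemma L_Ex:
  assumes "j \<le> n" "Suc k \<le> j" "two_ne (Tj j)"
  shows "\<exists>m. Suc k \<le> m \<and> m \<le> n \<and> two_ne (Tj m)
     \<and> reach (Bc A M) w (Ex (qs ! k) (Tj j), int (Suc j)) (Ret (qs ! k) r (Tj m), int m) 1"
  using assms
proof (induction j rule: inc_induct)
  case base
  have inr: "Fset M \<in> Tj n r" using E2[of n] base k by (simp add: suf_def)
  have ex: "\<exists>!s. Fset M \<in> Tj n s" by (intro ex1I[of _ r] inr) (rule E3[OF _ inr])
  have th: "(THE s. Fset M \<in> Tj n s) = r" by (intro the_equality inr) (rule E3[OF _ inr])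
  have "reach (Bc A M) w (Ex (qs ! k) (Tj n), int (Suc n)) (Ret (qs ! k) r (Tj n), int n) 1"
  proof (rule reach_d'[where d = DL and p' = "Ret (qs ! k) r (Tj n)" and x = 1 and y = 1 and j = "int n"])
    show "delta M (Ex (qs ! k) (Tj n)) (tape w (int (Suc n))) = Some (DL, Ret (qs ! k) r (Tj n), 1)"
      using ex th by simp
    show "vst M (Ex (qs ! k) (Tj n))" using qs_S1[of k] k gvalT by simp
  qed (use w reach.refl in auto)
  then show ?case using base by blast
next
  case (step m)
  have tp: "tape w (int (Suc m)) = Letter (w ! m)" using step.hyps by (simp add: tape_Sucs)
  have e1: "exstep M (Tj m) (w ! m) = Tj (Suc m)" using E1 step.hyps step.prems by simp
  have v: "vst M (Ex (qs ! k) (Tj m))" using qs_S1[of k] k gvalT by simp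
  show ?case
  proof (cases "two_ne (Tj (Suc m))")
    case True
    have sk: "Suc k \<le> Suc m" using step.prems by simp
    obtain m2 where m2: "Suc k \<le> m2" "m2 \<le> n" "two_ne (Tj m2)"
      "reach (Bc A M) w (Ex (qs ! k) (Tj (Suc m)), int (Suc (Suc m))) (Ret (qs ! k) r (Tj m2), int m2) 1"
      using step.IH[OF sk True] by blast
    have "reach (Bc A M) w (Ex (qs ! k) (Tj m), int (Suc m)) (Ret (qs ! k) r (Tj m2), int m2) 1"
    proof (rule reach_d'[where d = DR and p' = "Ex (qs ! k) (Tj (Suc m))" and x = 1 and y = 1 and j = "int (Suc (Suc m))"])
      show "delta M (Ex (qs ! k) (Tj m)) (tape w (int (Suc m))) = Some (DR, Ex (qs ! k) (Tj (Suc m)), 1)"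
        using tp e1 True by simp
    qed (use w m2 v step.hyps in auto)
    then show ?thesis using m2 by blast
  next
    case False
    have rn: "Tj (Suc m) r \<noteq> {}" using E2[of "Suc m"] step.hyps step.prems by auto
    have uq: "s = r" if "Tj (Suc m) s \<noteq> {}" for s
    proof (rule ccontr)
      assume "s \<noteq> r"
      then have "two_ne (Tj (Suc m))" using that rn unfolding two_ne_def by blast
      then show False using False by simp
    qed
    have ex: "\<exists>!s. Tj (Suc m) s \<noteq> {}" by (intro ex1I[of _ r] rn uq)
    have th: "(THE s. Tj (Suc m) s \<noteq> {}) = r" by (intro the_equality rn uq)
    have "reach (Bc A M) w (Ex (qs ! k) (Tj m), int (Suc m)) (Ret (qs ! k) r (Tj m), int m) 1"
    proof (rule reach_d'[where d = DL and p' = "Ret (qs ! k) r (Tj m)" and x = 1 and y = 1 and j = "int m"])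
      show "delta M (Ex (qs ! k) (Tj m)) (tape w (int (Suc m))) = Some (DL, Ret (qs ! k) r (Tj m), 1)"
        using tp e1 False ex th by simp
    qed (use w v step.hyps reach.refl in auto)
    then show ?thesis using step.hyps step.prems by (intro exI[of _ m]) simp
  qed
qed

lemma L_Ret:
  assumes "Suc k \<le> j" "j \<le> n" "\<forall>s. U s \<subseteq> Tj j s" "two_ne U"
  shows "reach (Bc A M) w (Ret (qs ! k) r U, int j) (Run (qs ! Suc k) r, int (Suc (Suc k))) (g k)"
  using assms
proof (induction j arbitrary: U rule: nat_induct_at_least)
  case base
  have tp: "tape w (int (Suc k)) = Letter (w ! k)" using k by (simp add: tape_Sucs)
  obtain s1 s2 where s: "s1 \<noteq> s2" "U s1 \<noteq> {}" "U s2 \<noteq> {}" using base.prems unfolding two_ne_def by blast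
  have Us: "s \<in> D \<and> U s = {s}" if "U s \<noteq> {}" for s
    using base.prems(2) that E0 by (auto split: if_splits)
  have "pre M s (w ! k) = S" if "s \<in> D" for s using that unfolding D_def Dset_def by simp
  then have "imgstep M U (w ! k) s1 \<inter> imgstep M U (w ! k) s2 \<noteq> {}"
    using Us[OF s(2)] Us[OF s(3)] unfolding imgstep_def by simp
  then have mg: "merges (imgstep M U (w ! k))" using s(1) unfolding merges_def by blast
  have gU: "gval M U" using base.prems(2) gvalT[of "Suc k"] unfolding gval_def by blast
  show ?case
  proof (rule reach_d'[where d = DR and p' = "Run (qs ! Suc k) r" and x = "g k" and y = 1 and j = "int (Suc (Suc k))"])
    show "delta M (Ret (qs ! k) r U) (tape w (int (Suc k))) = Some (DR, Run (qs ! Suc k) r, g k)"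
      using tp mg nxt_ok[OF k] unfolding r_def by simp
    show "vst M (Ret (qs ! k) r U)" using qs_S1[of k] k r_sub gU by simp
  qed (use w k reach.refl in auto)
next
  case (Suc j)
  have tp: "tape w (int (Suc j)) = Letter (w ! j)" using Suc by (simp add: tape_Sucs)
  let ?U' = "imgstep M U (w ! j)"
  have sub: "\<forall>s. ?U' s \<subseteq> Tj j s"
  proof
    fix s show "?U' s \<subseteq> Tj j s"
    proof
      fix x assume "x \<in> ?U' s"
      then obtain t where t: "t \<in> U s" "x = pre M t (w ! j)" unfolding imgstep_def by blast
      then have "t \<in> Tj (Suc j) s" using Suc.prems by blast
      then show "x \<in> Tj j s" using t seg_Suc[of j] Suc.hyps Suc.prems unfolding Tj_def
        by (auto simp: presuf_snoc split: if_splits dest: pre_mem)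
    qed
  qed
  have nm: "\<not> merges ?U'"
  proof
    assume "merges ?U'"
    then obtain s1 s2 x where "s1 \<noteq> s2" "x \<in> ?U' s1" "x \<in> ?U' s2" unfolding merges_def by blast
    then show False using sub E3[of x j s1 s2] by blast
  qed
  have tn: "two_ne ?U'" using Suc.prems unfolding two_ne_def imgstep_def by blast
  have gU: "gval M U" using Suc.prems gvalT[of "Suc j"] unfolding gval_def by blast
  show ?case
  proof (rule reach_d'[where d = DL and p' = "Ret (qs ! k) r ?U'" and x = 1 and y = "g k" and j = "int j"])
    show "delta M (Ret (qs ! k) r U) (tape w (int (Suc j))) = Some (DL, Ret (qs ! k) r ?U', 1)"
      using tp nm by simp
    show "vst M (Ret (qs ! k) r U)" using qs_S1[of k] k r_sub gU by simp
    show "reach (Bc A M) w (Ret (qs ! k) r ?U', int j) (Run (qs ! Suc k) r, int (Suc (Suc k))) (g k)"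
      using Suc.IH[of ?U'] Suc.prems sub tn by simp
  qed (use w Suc in auto)
qed

lemma L_run:
  "reach (Bc A M) w (Run (qs ! k) S, int (Suc k)) (Run (qs ! Suc k) r, int (Suc (Suc k))) (g k)"
proof -
  have tp: "tape w (int (Suc k)) = Letter (w ! k)" using k by (simp add: tape_Sucs)
  have v: "vst M (Run (qs ! k) S)" using qs_S1[of k] k suf_sub unfolding S_def by simp
  show ?thesis
  proof (cases "\<exists>s1 s2. s1 \<in> D \<and> s2 \<in> D \<and> s1 \<noteq> s2")
    case True
    have tn: "two_ne (Tj (Suc k))" using True unfolding E0 two_ne_def by auto
    obtain m where m: "Suc k \<le> m" "m \<le> n" "two_ne (Tj m)"
      "reach (Bc A M) w (Ex (qs ! k) (Tj (Suc k)), int (Suc (Suc k))) (Ret (qs ! k) r (Tj m), int m) 1"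
      using L_Ex[OF _ _ tn] k by (metis Suc_leI order_refl)
    have "reach (Bc A M) w (Ex (qs ! k) (Tj (Suc k)), int (Suc (Suc k))) (Run (qs ! Suc k) r, int (Suc (Suc k))) (1 * g k)"
      using reach_trans[OF m(4) L_Ret[OF m(1,2) _ m(3)]] by simp
    note R = this
    show ?thesis
    proof (rule reach_d'[where d = DR and p' = "Ex (qs ! k) (Tj (Suc k))" and x = 1 and y = "1 * g k" and j = "int (Suc (Suc k))"])
      show "delta M (Run (qs ! k) S) (tape w (int (Suc k))) = Some (DR, Ex (qs ! k) (Tj (Suc k)), 1)"
        using tp True unfolding E0 D_def by simp
    qed (use w v R k in auto)
  next
    case False
    have Dr: "D = {r}"
    proof
      show "D \<subseteq> {r}" using False r_in_D by blast
      show "{r} \<subseteq> D" using r_in_D by simp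
    qed
    have th: "(THE s. D = {s}) = r" using Dr by simp
    show ?thesis
    proof (rule reach_d'[where d = DR and p' = "Run (qs ! Suc k) r" and x = "g k" and y = 1 and j = "int (Suc (Suc k))"])
      have "\<not> (\<exists>s1 s2. s1 \<in> Dset M S (w ! k) \<and> s2 \<in> Dset M S (w ! k) \<and> s1 \<noteq> s2)" using False unfolding D_def by simp
      then show "delta M (Run (qs ! k) S) (tape w (int (Suc k))) = Some (DR, Run (qs ! Suc k) r, g k)"
        using tp Dr th nxt_ok[OF k] unfolding D_def r_def S_def by simp
    qed (use w v k reach.refl in auto)
  qed
qed

end



context step_ctx
begin
lemma L_run': "reach (Bc A M) w (Run (qs ! k) (suf M (drop k w)), int (Suc k))
   (Run (qs ! Suc k) (suf M (drop (Suc k) w)), int (Suc (Suc k))) (g k)"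
  using L_run unfolding S_def r_def .
end

context run_ctx
begin

lemma L_chain:
  assumes "k \<le> n"
  shows "reach (Bc A M) w (Run (qs ! k) (suf M (drop k w)), int (Suc k))
     (Run (qs ! n) (suf M (drop n w)), int (Suc n)) (prod_list (map g [k..<n]))"
  using assms
proof (induction k rule: inc_induct)
  case base
  show ?case using reach.refl by simp
next
  case (step m)
  interpret st: step_ctx A M w qs m by unfold_locales (use step.hyps in simp)
  have "reach (Bc A M) w (Run (qs ! m) (suf M (drop m w)), int (Suc m))
     (Run (qs ! n) (suf M (drop n w)), int (Suc n)) (g m * prod_list (map g [Suc m..<n]))"
    by (rule reach_trans[OF st.L_run' step.IH])
  then show ?case using step.hyps by (simp add: upt_conv_Cons)
qed

lemma L_total:
  "reach (Bc A M) w (GoR, 1) (Run (qs ! n) (Fset M), int n + 1)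
     (the (init1 M (qs ! 0)) * prod_list (map g [0..<n]))"
proof -
  have R4: "reach (Bc A M) w (Run (qs ! 0) (suf M w), 1) (Run (qs ! n) (Fset M), int (Suc n)) (prod_list (map g [0..<n]))"
    using L_chain[of 0] by (simp add: suf_def)
  note R3 = reach_trans[OF L_start R4]
  have R2: "reach (Bc A M) w (Back (Fset M), int n) (Run (qs ! n) (Fset M), int (Suc n))
     (1 * (the (init1 M (qs ! 0)) * prod_list (map g [0..<n])))"
    using reach_trans[OF L_Back[of n] R3] by (simp add: suf_def)
  have R1: "reach (Bc A M) w (GoR, int (Suc n)) (Run (qs ! n) (Fset M), int (Suc n))
     (1 * (1 * (the (init1 M (qs ! 0)) * prod_list (map g [0..<n]))))"
    by (rule reach_d'[where d = DL and p' = "Back (Fset M)" and j = "int n", OF _ w _ _ _ _ R2]) auto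
  have "reach (Bc A M) w (GoR, int 1) (Run (qs ! n) (Fset M), int (Suc n))
     (1 * (1 * (1 * (the (init1 M (qs ! 0)) * prod_list (map g [0..<n])))))"
    by (rule reach_trans[OF L_GoR R1]) auto
  then show ?thesis by (simp add: add.commute)
qed

lemma success:
  "comps2 (Bc A M) w = {cs. cs \<in> comps2 (Bc A M) w} \<and> finite (comps2 (Bc A M) w)
   \<and> weight2 (Bc A M) w = weight1 M w"
proof -
  have lq: "last qs = qs ! n" using qs_len by (subst last_conv_nth) auto
  have fn: "fin1 M (qs ! n) \<noteq> None" using qs_fin lq by simp
  have vr: "vst M (Run (qs ! n) (Fset M))" using qs_S1[of n] Fset_sub by simp
  have fin2: "fin2 (Bc A M) (Run (qs ! n) (Fset M)) = Some (the (fin1 M (qs ! n)))"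
    using fn vr unfolding Bc_simps by simp
  have init2: "init2 (Bc A M) GoR = Some 1" unfolding Bc_simps by simp
  obtain cs where cs: "cs \<in> comps2 (Bc A M) w"
    "cweight2 (Bc A M) w cs = 1 * (the (init1 M (qs ! 0)) * prod_list (map g [0..<n])) * the (fin1 M (qs ! n))"
    using reach_comp[OF L_total Bc_wf[OF wf] init2 fin2] by blast
  have c2: "comps2 (Bc A M) w = {cs}" using cs(1) det_unique[OF Bc_wf[OF wf] Bc_det] by blast
  have c1: "comps1 M w = {qs}" using qs uniq by blast
  have "cweight1 M w qs = the (init1 M (qs ! 0)) * prod_list (map g [0..<n]) * the (fin1 M (qs ! n))"
  proof -
    have hq: "hd qs = qs ! 0" using qs_len by (cases qs) auto
    show ?thesis unfolding cweight1_def g_def hq lq ..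
  qed
  then have "weight2 (Bc A M) w = weight1 M w"
    unfolding weight2_def weight1_def c1 c2 using cs(2) by (simp add: mult.assoc)
  then show ?thesis using c2 by simp
qed

end

lemma trans_delta: "trans2 (Bc A M) p a d q \<noteq> None \<Longrightarrow> \<exists>x. delta M p a = Some (d, q, x)"
  unfolding Bc_simps by (auto split: if_splits option.splits)

lemma failure:
  assumes wf: "wf1 A M" and w: "w \<in> lists A" and e: "comps1 M w = {}"
  shows "comps2 (Bc A M) w = {}"
proof (rule ccontr)
  assume "comps2 (Bc A M) w \<noteq> {}"
  then obtain cs where cs: "cs \<in> comps2 (Bc A M) w" by blast
  let ?n = "length w"
  define Inv where "Inv c \<longleftrightarrow> (fst c = GoR \<and> 1 \<le> snd c \<and> snd c \<le> int ?n + 1)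
      \<or> (\<exists>k \<le> ?n. fst c = Back (suf M (drop k w)) \<and> snd c = int k)" for c
  have c: "cs \<noteq> []" "snd (hd cs) = 1" "init2 (Bc A M) (fst (hd cs)) \<noteq> None"
     "fin2 (Bc A M) (fst (last cs)) \<noteq> None"
     "\<forall>j. Suc j < length cs \<longrightarrow> (\<exists>d.
            trans2 (Bc A M) (fst (cs ! j)) (tape w (snd (cs ! j))) d (fst (cs ! Suc j)) \<noteq> None
            \<and> snd (cs ! Suc j) = snd (cs ! j) + dval d)"
    using cs unfolding comps2_def by auto
  have nostart: "\<not> (\<exists>!q. init1 M q \<noteq> None \<and> q \<in> suf M w)" using no_run[OF wf e] by blast
  have I: "j < length cs \<Longrightarrow> Inv (cs ! j)" for j
  proof (induction j)
    case 0
    then show ?case using c(1,2,3) unfolding Inv_def Bc_simps by (auto simp: hd_conv_nth split: if_splits)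
  next
    case (Suc j)
    obtain d where d: "trans2 (Bc A M) (fst (cs ! j)) (tape w (snd (cs ! j))) d (fst (cs ! Suc j)) \<noteq> None"
        "snd (cs ! Suc j) = snd (cs ! j) + dval d" using c(5) Suc.prems by blast
    obtain x where dl: "delta M (fst (cs ! j)) (tape w (snd (cs ! j))) = Some (d, fst (cs ! Suc j), x)"
      using trans_delta[OF d(1)] by blast
    have IH: "Inv (cs ! j)" using Suc by simp
    show ?case
    proof (cases "fst (cs ! j) = GoR")
      case True
      then have i: "1 \<le> snd (cs ! j)" "snd (cs ! j) \<le> int ?n + 1" using IH unfolding Inv_def by auto
      show ?thesis
      proof (cases "snd (cs ! j) = int ?n + 1")
        case True2: True
        then have "d = DL \<and> fst (cs ! Suc j) = Back (Fset M)" using dl True by simp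
        then show ?thesis using d(2) True2 unfolding Inv_def by (intro disjI2 exI[of _ ?n]) (simp add: suf_def)
      next
        case False
        define m where "m = nat (snd (cs ! j) - 1)"
        have m: "snd (cs ! j) = int (Suc m)" "m < ?n" using i False unfolding m_def by auto
        then have "d = DR \<and> fst (cs ! Suc j) = GoR" using dl True by (simp add: tape_Sucs)
        then show ?thesis using d(2) m unfolding Inv_def by auto
      qed
    next
      case False
      then obtain k where k: "k \<le> ?n" "fst (cs ! j) = Back (suf M (drop k w))" "snd (cs ! j) = int k"
        using IH unfolding Inv_def by auto
      show ?thesis
      proof (cases k)
        case 0
        then show ?thesis using dl k nostart by (simp split: if_splits)
      next
        case (Suc m)
        then have "d = DL \<and> fst (cs ! Suc j) = Back (suf M (drop m w))"
          using dl k by (simp add: tape_Sucs suf_drop)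
        then show ?thesis using d(2) k Suc unfolding Inv_def by auto
      qed
    qed
  qed
  have "Inv (last cs)" using I[of "length cs - 1"] c(1) by (simp add: last_conv_nth)
  then have "fst (last cs) = GoR \<or> (\<exists>S. fst (last cs) = Back S)" unfolding Inv_def by auto
  then have "fin2 (Bc A M) (fst (last cs)) = None" unfolding Bc_simps by auto
  then show False using c(4) by simp
qed

theorem mainTheorem5:
  fixes A :: "'a set"
    and M :: "('p, 'a, 'k::{semiring_0, monoid_mult}) oneway"
  assumes "finite A"
    and "wf1 A M"
    and "unambiguous1 A M"
  shows "\<exists>B :: (nat, 'a, 'k) twoway. wf2 A B \<and> deterministic2 B
           \<and> (\<forall>w \<in> lists A. finite (comps2 B w) \<and> weight2 B w = weight1 M w)"
proof (rule rename_nat[OF Bc_wf[OF assms(2)] Bc_det])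
  show "\<forall>w\<in>lists A. finite (comps2 (Bc A M) w) \<and> weight2 (Bc A M) w = weight1 M w"
  proof
    fix w assume w: "w \<in> lists A"
    show "finite (comps2 (Bc A M) w) \<and> weight2 (Bc A M) w = weight1 M w"
    proof (cases "comps1 M w = {}")
      case True
      then show ?thesis using failure[OF assms(2) w True] unfolding weight2_def weight1_def by simp
    next
      case False
      then obtain qs where qs: "qs \<in> comps1 M w" by blast
      interpret run_ctx A M w qs by unfold_locales (use assms(2,3) w qs in auto)
      show ?thesis using success by blast
    qed
  qed
qed


end
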